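(* Let $M\ge 1$, and let $N_s,R_s$, and for each $m\in\{1,\dots,M\}$ let $N_{d,m},R_{d,m},D_m$ be positive integers, with $D=\sum_{m=1}^M D_m$. Let $P_t>0$, $\sigma_m>0$ and $\sigma_{e,m}\ge 0$ for each $m$. Let $\bar{\mathbf H}_m\in\mathbb C^{N_{d,m}\times N_s}$ be given matrices, let $\mathbf L\in\{0,1\}^{D\times D}$ be a fixed permutation matrix, and let $\mathbf A_m=[\mathbf 0_{D_m\times\sum_{i<m}D_i},\ \mathbf I_{D_m},\ \mathbf 0_{D_m\times\sum_{i>m}D_i}]$. The optimization variables are $\mathcal S=\{\{\mathbf P_m,\mathbf F_m\},\mathbf T,\mathbf W,\mathbf U\}$ with $\mathbf P_m\in\mathbb C^{D_m\times R_{d,m}}$, $\mathbf F_m\in\mathbb C^{R_{d,m}\times N_{d,m}}$, $\mathbf T\in\mathbb C^{N_s\times R_s}$, $\mathbf W\in\mathbb C^{R_s\times D}$, and $\mathbf U\in\mathbb C^{D\times D}$ lower triangular with all diagonal entries equal to $1$ (only its strictly lower triangular entries are free). Define $$\mathrm{MSE}=\sum_{m=1}^M \mathrm{tr}\Big(\mathbf P_m\mathbf F_m\bar{\mathbf H}_m\mathbf T\mathbf W\mathbf W^H\mathbf T^H\bar{\mathbf H}_m^H\mathbf F_m^H\mathbf P_m^H+\sigma_{e,m}^2\,\mathrm{tr}(\mathbf T\mathbf W\mathbf W^H\mathbf T^H)\,\mathbf P_m\mathbf F_m\mathbf F_m^H\mathbf P_m^H+\sigma_m^2\mathbf P_m\mathbf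 F_m\mathbf F_m^H\mathbf P_m^H-\mathbf P_m\mathbf F_m\bar{\mathbf H}_m\mathbf T\mathbf W\mathbf U^H\mathbf L\mathbf A_m^H-\mathbf A_m\mathbf L^T\mathbf U\mathbf W^H\mathbf T^H\bar{\mathbf H}_m^H\mathbf F_m^H\mathbf P_m^H\Big)+\mathrm{tr}(\mathbf U\mathbf U^H),$$ and, with $\hat{\mathbf H}_m=\bar{\mathbf H}_m/\sigma_m$ and $\hat\sigma_{e,m}=\sigma_{e,m}/\sigma_m$, $$\mathrm{MSE}_\sigma=\sum_{m=1}^M \mathrm{tr}\Big(\mathbf P_m\mathbf F_m\hat{\mathbf H}_m\mathbf T\mathbf W\mathbf W^H\mathbf T^H\hat{\mathbf H}_m^H\mathbf F_m^H\mathbf P_m^H+\hat\sigma_{e,m}^2\,\mathrm{tr}(\mathbf T\mathbf W\mathbf W^H\mathbf T^H)\,\mathbf P_m\mathbf F_m\mathbf F_m^H\mathbf P_m^H+\tfrac{1}{P_t}\mathrm{tr}(\mathbf T\mathbf W\mathbf W^H\mathbf T^H)\,\mathbf P_m\mathbf F_m\mathbf F_m^H\mathbf P_m^H-\mathbf P_m\mathbf F_m\hat{\mathbf H}_m\mathbf T\mathbf W\mathbf U^H\mathbf L\mathbf A_m^H-\mathbf A_m\mathbf L^T\mathbf U\mathbf W^H\mathbf T^H\hat{\mathbf H}_m^H\mathbf F_m^H\mathbf P_m^H\Big)+\mathrm{tr}(\mathbf U\mathbf U^H).$$ Consider problem (I): minimize $\mathrm{MSE}$ over $\mathcal S$ subject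 to $|[\mathbf F_m]_{i,j}|=1$ for all $m,i,j$, $|[\mathbf T]_{i,j}|=1$ for all $i,j$, and $\|\mathbf T\mathbf W\|^2\le P_t$; and problem (II): minimize $\mathrm{MSE}_\sigma$ over $\mathcal S$ subject only to $|[\mathbf F_m]_{i,j}|=1$ for all $m,i,j$ and $|[\mathbf T]_{i,j}|=1$ for all $i,j$. Let $(\{\mathbf P_m^\star,\mathbf F_m^\star\},\mathbf T^\star,\mathbf W^\star,\mathbf U^\star)$ be a KKT solution of problem (II), and let $a=\sqrt{P_t}/\|\mathbf T^\star\mathbf W^\star\|$. Then $(\{\tfrac{1}{a\sigma_m}\mathbf P_m^\star,\mathbf F_m^\star\},\mathbf T^\star,a\mathbf W^\star,\mathbf U^\star)$ is a KKT solution of problem (I).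
   Context: $\|\cdot\|$ denotes the Frobenius norm; $(\cdot)^H$ is conjugate transpose. KKT solutions are understood for the real optimization problems obtained by treating real and imaginary parts of the complex variables (equivalently, Wirtinger derivatives with respect to conjugate variables), with the unit-modulus conditions as equality constraints and $\|\mathbf T\mathbf W\|^2\le P_t$ as an inequality constraint. The scaling factor $a$ is defined by the given formula (so $\mathbf T^\star\mathbf W^\star\neq \mathbf 0$ is implicit). *)

theory Defs
  imports "HOL-Analysis.Analysis"
begin

type_synonym cmat = "nat \<Rightarrow> nat \<Rightarrow> complex"

definition mmul :: "nat \<Rightarrow> cmat \<Rightarrow> cmat \<Rightarrow> cmat" where
  "mmul n A B = (\<lambda>i j. \<Sum>k<n. A i k * B k j)"

definition ctr :: "cmat \<Rightarrow> cmat" where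
  "ctr A = (\<lambda>i j. cnj (A j i))"

definition trn :: "cmat \<Rightarrow> cmat" where
  "trn A = (\<lambda>i j. A j i)"

definition mtrace :: "nat \<Rightarrow> cmat \<Rightarrow> complex" where
  "mtrace n A = (\<Sum>i<n. A i i)"

definition smul :: "complex \<Rightarrow> cmat \<Rightarrow> cmat" where
  "smul c A = (\<lambda>i j. c * A i j)"

definition madd :: "cmat \<Rightarrow> cmat \<Rightarrow> cmat" where
  "madd A B = (\<lambda>i j. A i j + B i j)"

definition msub :: "cmat \<Rightarrow> cmat \<Rightarrow> cmat" where
  "msub A B = (\<lambda>i j. A i j - B i j)"

definition idm :: cmat where
  "idm = (\<lambda>i j. if i = j then 1 else 0)"

definition fro2 :: "nat \<Rightarrow> nat \<Rightarrow> cmat \<Rightarrow> real" where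
  "fro2 r c A = (\<Sum>i<r. \<Sum>j<c. (cmod (A i j))\<^sup>2)"

definition is_perm_matrix :: "nat \<Rightarrow> (nat \<Rightarrow> nat \<Rightarrow> real) \<Rightarrow> bool" where
  "is_perm_matrix D L \<longleftrightarrow> (\<exists>p. bij_betw p {..<D} {..<D} \<and>
      (\<forall>i<D. \<forall>j<D. L i j = (if j = p i then 1 else 0)))"

text \<open>Selection matrix A_m = [0, I_{D_m}, 0] (0-indexed users m < M), of size D_m x D.\<close>
definition Asel :: "(nat \<Rightarrow> nat) \<Rightarrow> nat \<Rightarrow> cmat" where
  "Asel Dd m = (\<lambda>i j. if i < Dd m \<and> j = (\<Sum>k<m. Dd k) + i then 1 else 0)"

text \<open>A point assigns to each block (P, F, T, W, U), user index m, and entry (i,j)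
  a complex number.  T, W, U do not depend on m (only m = 0 is used).\<close>
datatype blk = BP | BF | BT | BW | BU
datatype part = ReP | ImP

type_synonym var = "blk \<Rightarrow> nat \<Rightarrow> nat \<Rightarrow> nat \<Rightarrow> complex"
type_synonym coord = "blk \<times> nat \<times> nat \<times> nat \<times> part"

definition get_coord :: "var \<Rightarrow> coord \<Rightarrow> real" where
  "get_coord x c = (case c of (b, m, i, j, p) \<Rightarrow>
      (if p = ReP then Re (x b m i j) else Im (x b m i j)))"

definition set_coord :: "var \<Rightarrow> coord \<Rightarrow> real \<Rightarrow> var" where
  "set_coord x c t = (case c of (b, m, i, j, p) \<Rightarrow>
      (\<lambda>b' m' i' j'. if (b', m', i', j') = (b, m, i, j)
          then (if p = ReP then Complex t (Im (x b m i j)) else Complex (Re (x b m i j)) t)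
          else x b' m' i' j'))"

definition pdiff :: "(var \<Rightarrow> real) \<Rightarrow> var \<Rightarrow> coord \<Rightarrow> bool" where
  "pdiff f x c \<longleftrightarrow> (\<exists>d. ((\<lambda>t. f (set_coord x c t)) has_real_derivative d) (at (get_coord x c)))"

definition pd :: "(var \<Rightarrow> real) \<Rightarrow> var \<Rightarrow> coord \<Rightarrow> real" where
  "pd f x c = (THE d. ((\<lambda>t. f (set_coord x c t)) has_real_derivative d) (at (get_coord x c)))"

definition KKT :: "coord set \<Rightarrow> (var \<Rightarrow> real) \<Rightarrow> 'e set \<Rightarrow> ('e \<Rightarrow> var \<Rightarrow> real)
    \<Rightarrow> 'i set \<Rightarrow> ('i \<Rightarrow> var \<Rightarrow> real) \<Rightarrow> var \<Rightarrow> bool" where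
  "KKT C f E g I h x \<longleftrightarrow>
     (\<forall>e\<in>E. g e x = 0) \<and> (\<forall>i\<in>I. h i x \<le> 0) \<and>
     (\<forall>c\<in>C. pdiff f x c \<and> (\<forall>e\<in>E. pdiff (g e) x c) \<and> (\<forall>i\<in>I. pdiff (h i) x c)) \<and>
     (\<exists>lam mu. (\<forall>i\<in>I. mu i \<ge> (0::real) \<and> mu i * h i x = 0) \<and>
        (\<forall>c\<in>C. pd f x c + (\<Sum>e\<in>E. (lam e :: real) * pd (g e) x c)
                 + (\<Sum>i\<in>I. mu i * pd (h i) x c) = 0))"

definition Ueff :: "var \<Rightarrow> cmat" where
  "Ueff x = (\<lambda>i j. if i = j then 1 else if j < i then x BU 0 i j else 0)"

definition free_coords :: "nat \<Rightarrow> nat \<Rightarrow> nat \<Rightarrow> (nat \<Rightarrow> nat) \<Rightarrow> (nat \<Rightarrow> nat) \<Rightarrow> (nat \<Rightarrow> nat)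
     \<Rightarrow> coord set" where
  "free_coords M Ns Rs Nd Rd Dd = (let D = (\<Sum>m<M. Dd m) in
      {(BP, m, i, j, p) | m i j p. m < M \<and> i < Dd m \<and> j < Rd m}
    \<union> {(BF, m, i, j, p) | m i j p. m < M \<and> i < Rd m \<and> j < Nd m}
    \<union> {(BT, 0, i, j, p) | i j p. i < Ns \<and> j < Rs}
    \<union> {(BW, 0, i, j, p) | i j p. i < Rs \<and> j < D}
    \<union> {(BU, 0, i, j, p) | i j p. i < D \<and> j < i})"

definition um_idx :: "nat \<Rightarrow> nat \<Rightarrow> nat \<Rightarrow> (nat \<Rightarrow> nat) \<Rightarrow> (nat \<Rightarrow> nat)
     \<Rightarrow> (blk \<times> nat \<times> nat \<times> nat) set" where
  "um_idx M Ns Rs Nd Rd =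
      {(BF, m, i, j) | m i j. m < M \<and> i < Rd m \<and> j < Nd m}
    \<union> {(BT, 0, i, j) | i j. i < Ns \<and> j < Rs}"

definition um_con :: "blk \<times> nat \<times> nat \<times> nat \<Rightarrow> var \<Rightarrow> real" where
  "um_con e x = (case e of (b, m, i, j) \<Rightarrow> cmod (x b m i j) - 1)"

definition TWm :: "nat \<Rightarrow> var \<Rightarrow> cmat" where
  "TWm Rs x = mmul Rs (x BT 0) (x BW 0)"

definition dimD :: "nat \<Rightarrow> (nat \<Rightarrow> nat) \<Rightarrow> nat" where
  "dimD M Dd = (\<Sum>k<M. Dd k)"

definition trTW :: "nat \<Rightarrow> nat \<Rightarrow> nat \<Rightarrow> (nat \<Rightarrow> nat) \<Rightarrow> var \<Rightarrow> complex" where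
  "trTW M Ns Rs Dd x = mtrace Ns (mmul (dimD M Dd) (TWm Rs x) (ctr (TWm Rs x)))"

definition mse_mat :: "nat \<Rightarrow> nat \<Rightarrow> nat \<Rightarrow> (nat \<Rightarrow> nat) \<Rightarrow> (nat \<Rightarrow> nat) \<Rightarrow> (nat \<Rightarrow> nat)
    \<Rightarrow> (nat \<Rightarrow> nat \<Rightarrow> real) \<Rightarrow> nat \<Rightarrow> cmat \<Rightarrow> real \<Rightarrow> complex \<Rightarrow> var \<Rightarrow> cmat" where
  "mse_mat M Ns Rs Nd Rd Dd L m H ce cn x = (let
      D = dimD M Dd;
      P = x BP m; F = x BF m; U = Ueff x;
      Lc = (\<lambda>i j. complex_of_real (L i j));
      A = Asel Dd m;
      PF = mmul (Rd m) P F;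
      G = mmul Ns (mmul (Nd m) PF H) (TWm Rs x);
      PFPF = mmul (Nd m) PF (ctr PF)
    in msub (msub
         (madd (madd (mmul D G (ctr G))
                     (smul (complex_of_real ce * trTW M Ns Rs Dd x) PFPF))
               (smul cn PFPF))
         (mmul D (mmul D (mmul D G (ctr U)) Lc) (ctr A)))
         (mmul D (mmul D (mmul D A (trn Lc)) U) (ctr G)))"

text \<open>MSE of problem (I) (real-valued; Re is taken to view it as a real function).\<close>
definition MSE :: "nat \<Rightarrow> nat \<Rightarrow> nat \<Rightarrow> (nat \<Rightarrow> nat) \<Rightarrow> (nat \<Rightarrow> nat) \<Rightarrow> (nat \<Rightarrow> nat)
    \<Rightarrow> (nat \<Rightarrow> nat \<Rightarrow> real) \<Rightarrow> (nat \<Rightarrow> cmat) \<Rightarrow> (nat \<Rightarrow> real) \<Rightarrow> (nat \<Rightarrow> real)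
    \<Rightarrow> var \<Rightarrow> real" where
  "MSE M Ns Rs Nd Rd Dd L Hbar sig sige x =
     Re ((\<Sum>m<M. mtrace (Dd m)
            (mse_mat M Ns Rs Nd Rd Dd L m (Hbar m) ((sige m)\<^sup>2) (complex_of_real ((sig m)\<^sup>2)) x))
         + mtrace (dimD M Dd) (mmul (dimD M Dd) (Ueff x) (ctr (Ueff x))))"

definition MSEs :: "nat \<Rightarrow> nat \<Rightarrow> nat \<Rightarrow> (nat \<Rightarrow> nat) \<Rightarrow> (nat \<Rightarrow> nat) \<Rightarrow> (nat \<Rightarrow> nat)
    \<Rightarrow> (nat \<Rightarrow> nat \<Rightarrow> real) \<Rightarrow> (nat \<Rightarrow> cmat) \<Rightarrow> (nat \<Rightarrow> real) \<Rightarrow> (nat \<Rightarrow> real) \<Rightarrow> real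
    \<Rightarrow> var \<Rightarrow> real" where
  "MSEs M Ns Rs Nd Rd Dd L Hbar sig sige Pt x =
     Re ((\<Sum>m<M. mtrace (Dd m)
            (mse_mat M Ns Rs Nd Rd Dd L m (smul (complex_of_real (1 / sig m)) (Hbar m))
               ((sige m / sig m)\<^sup>2)
               (complex_of_real (1 / Pt) * trTW M Ns Rs Dd x) x))
         + mtrace (dimD M Dd) (mmul (dimD M Dd) (Ueff x) (ctr (Ueff x))))"

definition pow_con :: "nat \<Rightarrow> nat \<Rightarrow> nat \<Rightarrow> (nat \<Rightarrow> nat) \<Rightarrow> real \<Rightarrow> unit \<Rightarrow> var \<Rightarrow> real" where
  "pow_con M Ns Rs Dd Pt u x = fro2 Ns (dimD M Dd) (TWm Rs x) - Pt"

definition scale_point :: "real \<Rightarrow> (nat \<Rightarrow> real) \<Rightarrow> var \<Rightarrow> var" where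
  "scale_point a sig x = (\<lambda>b m i j. case b of
      BP \<Rightarrow> x BP m i j / complex_of_real (a * sig m)
    | BW \<Rightarrow> complex_of_real a * x BW m i j
    | _ \<Rightarrow> x b m i j)"

end

theory Submission
  imports Defs
begin

definition dfb :: "(real \<Rightarrow> cmat) \<Rightarrow> real \<Rightarrow> bool" where
  "dfb F t0 \<longleftrightarrow> (\<forall>i j. (\<lambda>t. F t i j) differentiable (at t0))"

lemma dfb_mmul: "dfb A t0 \<Longrightarrow> dfb B t0 \<Longrightarrow> dfb (\<lambda>t. mmul n (A t) (B t)) t0"
  unfolding dfb_def mmul_def by (auto intro!: differentiable_sum differentiable_mult)

lemma diff_cnj: "f differentiable (at t0) \<Longrightarrow> (\<lambda>t. cnj (f t :: complex)) differentiable (at t0)"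
  by (rule differentiable_compose[of cnj], rule bounded_linear_imp_differentiable, rule bounded_linear_cnj)

lemma diff_Re: "f differentiable (at t0) \<Longrightarrow> (\<lambda>t. Re (f t :: complex)) differentiable (at t0)"
  by (rule differentiable_compose[of Re], rule bounded_linear_imp_differentiable, rule bounded_linear_Re)

lemma diff_ofreal: "f differentiable (at t0) \<Longrightarrow> (\<lambda>t. complex_of_real (f t)) differentiable (at t0)"
  by (rule differentiable_compose[of complex_of_real], rule bounded_linear_imp_differentiable, rule bounded_linear_of_real)

lemma dfb_ctr: "dfb A t0 \<Longrightarrow> dfb (\<lambda>t. ctr (A t)) t0"
  unfolding dfb_def ctr_def by (auto intro!: diff_cnj)

lemma diff_tr: "dfb A t0 \<Longrightarrow> (\<lambda>t. Re (mtrace n (A t))) differentiable (at t0)"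
  unfolding dfb_def mtrace_def by (auto intro!: diff_Re differentiable_sum)

lemma diff_base: "(\<lambda>t. set_coord x c (s*t) b m i j) differentiable (at t0)"
proof -
  obtain b0 m0 i0 j0 p0 where c: "c = (b0,m0,i0,j0,p0)" by (cases c) auto
  have d1: "(\<lambda>t. s*t) differentiable (at t0)" by (auto intro!: differentiable_mult)
  show ?thesis unfolding set_coord_def c Complex_eq
    using d1 by (cases "(b, m, i, j) = (b0, m0, i0, j0)"; cases "p0 = ReP")
         (auto intro!: differentiable_add differentiable_mult diff_ofreal)
qed

lemma dfb_base: "dfb (\<lambda>t. set_coord x c (s*t) b m) t0"
  unfolding dfb_def using diff_base by blast

lemma fro2_tr: "mtrace r (mmul c A (ctr A)) = complex_of_real (fro2 r c A)"
proof -
  have e: "\<And>z. z * cnj z = (complex_of_real (cmod z))^2"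
    by (metis complex_norm_square of_real_power)
  show ?thesis unfolding mtrace_def mmul_def ctr_def fro2_def by (simp add: e)
qed

lemma mmul_smul_l: "mmul n (smul k A) B = smul k (mmul n A B)"
  unfolding mmul_def smul_def by (simp add: sum_distrib_left mult.assoc)
lemma mmul_smul_r: "mmul n A (smul k B) = smul k (mmul n A B)"
  unfolding mmul_def smul_def by (simp add: sum_distrib_left mult.assoc mult.left_commute)
lemma ctr_smul: "ctr (smul k A) = smul (cnj k) (ctr A)"
  unfolding ctr_def smul_def by simp
lemma smul_smul: "smul k (smul l A) = smul (k*l) A"
  unfolding smul_def by (simp add: mult.assoc)
lemma mtrace_madd: "mtrace n (madd A B) = mtrace n A + mtrace n B"
  unfolding mtrace_def madd_def by (simp add: sum.distrib)
lemma mtrace_smul: "mtrace n (smul k A) = k * mtrace n A"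
  unfolding mtrace_def smul_def by (simp add: sum_distrib_left)

lemma sc_BP: "scale_point a sig z BP m = smul (complex_of_real (1/(a * sig m))) (z BP m)"
  unfolding scale_point_def smul_def by (auto simp: fun_eq_iff divide_inverse mult.commute)
lemma sc_BF: "scale_point a sig z BF m = z BF m"
  unfolding scale_point_def by (auto simp: fun_eq_iff)
lemma sc_BT: "scale_point a sig z BT m = z BT m"
  unfolding scale_point_def by (auto simp: fun_eq_iff)
lemma sc_BW: "scale_point a sig z BW m = smul (complex_of_real a) (z BW m)"
  unfolding scale_point_def smul_def by (auto simp: fun_eq_iff)
lemma sc_BU: "scale_point a sig z BU m = z BU m"
  unfolding scale_point_def by (auto simp: fun_eq_iff)
lemma sc_Ueff: "Ueff (scale_point a sig z) = Ueff z"
  unfolding Ueff_def sc_BU ..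
lemma sc_TW: "TWm Rs (scale_point a sig z) = smul (complex_of_real a) (TWm Rs z)"
  unfolding TWm_def sc_BT sc_BW mmul_smul_r ..
lemma sc_trTW: "trTW M Ns Rs Dd (scale_point a sig z) = complex_of_real (a^2) * trTW M Ns Rs Dd z"
  unfolding trTW_def sc_TW mmul_smul_l mmul_smul_r ctr_smul smul_smul mtrace_smul
  by (simp add: power2_eq_square)
lemma trTW_fro: "trTW M Ns Rs Dd z = complex_of_real (fro2 Ns (dimD M Dd) (TWm Rs z))"
  unfolding trTW_def fro2_tr ..
lemma sc_fro: "fro2 Ns D (TWm Rs (scale_point a sig z)) = a^2 * fro2 Ns D (TWm Rs z)"
proof -
  have "complex_of_real (fro2 Ns D (TWm Rs (scale_point a sig z))) = complex_of_real (a^2 * fro2 Ns D (TWm Rs z))"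
    unfolding fro2_tr[symmetric] sc_TW mmul_smul_l mmul_smul_r ctr_smul smul_smul mtrace_smul
    by (simp add: power2_eq_square fro2_tr)
  then show ?thesis using of_real_eq_iff by blast
qed

definition PFm :: "(nat \<Rightarrow> nat) \<Rightarrow> nat \<Rightarrow> var \<Rightarrow> cmat" where
  "PFm Rd m z = mmul (Rd m) (z BP m) (z BF m)"

lemma mse_mat_sc:
  assumes "a \<noteq> 0" "sig m \<noteq> 0"
  shows "mse_mat M Ns Rs Nd Rd Dd L m (Hbar m) ((sige m)\<^sup>2) (complex_of_real ((sig m)\<^sup>2)) (scale_point a sig z)
    = madd (mse_mat M Ns Rs Nd Rd Dd L m (smul (complex_of_real (1 / sig m)) (Hbar m))
               ((sige m / sig m)\<^sup>2)
               (complex_of_real (1 / Pt) * trTW M Ns Rs Dd z) z)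
         (smul (complex_of_real (1/a^2) - trTW M Ns Rs Dd z / complex_of_real Pt) (mmul (Nd m) (PFm Rd m z) (ctr (PFm Rd m z))))"
  unfolding mse_mat_def Let_def sc_BP sc_BF sc_Ueff sc_TW sc_trTW PFm_def
  apply (simp only: mmul_smul_l mmul_smul_r ctr_smul smul_smul)
  using assms by (simp add: fun_eq_iff smul_def madd_def msub_def power2_eq_square field_simps)

definition Qf :: "nat \<Rightarrow> (nat \<Rightarrow> nat) \<Rightarrow> (nat \<Rightarrow> nat) \<Rightarrow> (nat \<Rightarrow> nat) \<Rightarrow> var \<Rightarrow> real" where
  "Qf M Nd Rd Dd z = (\<Sum>m<M. fro2 (Dd m) (Nd m) (PFm Rd m z))"

lemma MSE_sc:
  assumes "a \<noteq> 0" "\<forall>m<M. sig m \<noteq> 0"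
  shows "MSE M Ns Rs Nd Rd Dd L Hbar sig sige (scale_point a sig z)
    = MSEs M Ns Rs Nd Rd Dd L Hbar sig sige Pt z
      + (1/a^2 - fro2 Ns (dimD M Dd) (TWm Rs z) / Pt) * Qf M Nd Rd Dd z"
proof -
  let ?e = "1/a^2 - fro2 Ns (dimD M Dd) (TWm Rs z) / Pt"
  have *: "mtrace (Dd m) (mse_mat M Ns Rs Nd Rd Dd L m (Hbar m) ((sige m)\<^sup>2) (complex_of_real ((sig m)\<^sup>2)) (scale_point a sig z))
     = mtrace (Dd m) (mse_mat M Ns Rs Nd Rd Dd L m (smul (complex_of_real (1 / sig m)) (Hbar m))
               ((sige m / sig m)\<^sup>2)
               (complex_of_real (1 / Pt) * trTW M Ns Rs Dd z) z)
       + complex_of_real (?e * fro2 (Dd m) (Nd m) (PFm Rd m z))" if "m \<in> {..<M}" for m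
  proof -
    have sm: "sig m \<noteq> 0" using assms that by auto
    show ?thesis
      unfolding mse_mat_sc[where sig=sig and m=m and Pt=Pt, OF assms(1) sm] mtrace_madd mtrace_smul fro2_tr trTW_fro
      by simp
  qed
  have **: "(\<Sum>m<M. mtrace (Dd m) (mse_mat M Ns Rs Nd Rd Dd L m (Hbar m) ((sige m)\<^sup>2) (complex_of_real ((sig m)\<^sup>2)) (scale_point a sig z)))
     = (\<Sum>m<M. mtrace (Dd m) (mse_mat M Ns Rs Nd Rd Dd L m (smul (complex_of_real (1 / sig m)) (Hbar m))
               ((sige m / sig m)\<^sup>2)
               (complex_of_real (1 / Pt) * trTW M Ns Rs Dd z) z)
       + complex_of_real (?e * fro2 (Dd m) (Nd m) (PFm Rd m z)))"
    by (rule sum.cong[OF refl *])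
  show ?thesis
    unfolding MSE_def MSEs_def Qf_def sc_Ueff **
    by (simp add: sum.distrib sum_distrib_left)
qed

lemma um_sc: "e \<in> um_idx M Ns Rs Nd Rd \<Longrightarrow> um_con e (scale_point a sig z) = um_con e z"
  unfolding um_idx_def um_con_def scale_point_def by auto

lemma pow_sc: "pow_con M Ns Rs Dd Pt u (scale_point a sig z) = a^2 * fro2 Ns (dimD M Dd) (TWm Rs z) - Pt"
  unfolding pow_con_def sc_fro ..

definition scf :: "real \<Rightarrow> (nat \<Rightarrow> real) \<Rightarrow> coord \<Rightarrow> real" where
  "scf a sig c = (case c of (b,m,_,_,_) \<Rightarrow> (case b of BP \<Rightarrow> a * sig m | BW \<Rightarrow> 1/a | _ \<Rightarrow> 1))"

lemma set_sc:
  assumes "a \<noteq> 0" "c = (b,m,i,j,p)" "b = BP \<longrightarrow> sig m \<noteq> 0"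
  shows "set_coord (scale_point a sig x) c t = scale_point a sig (set_coord x c (scf a sig c * t))"
  using assms
  by (cases b; cases p) (auto simp: fun_eq_iff set_coord_def scale_point_def scf_def complex_eq_iff split: blk.split)

lemma get_sc:
  assumes "a \<noteq> 0" "c = (b,m,i,j,p)" "b = BP \<longrightarrow> sig m \<noteq> 0"
  shows "scf a sig c * get_coord (scale_point a sig x) c = get_coord x c"
  using assms
  by (cases b; cases p) (auto simp: get_coord_def scale_point_def scf_def)

lemma set_get: "set_coord x c (get_coord x c) = x"
  by (cases c) (auto simp: fun_eq_iff set_coord_def get_coord_def complex_eq_iff)

lemma pd_transfer:
  assumes eq: "\<And>t. f (set_coord y c t) = g (set_coord x c (s*t)) + h t"
    and pg: "pdiff g x c" and hd: "(h has_real_derivative dh) (at (get_coord y c))"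
    and st: "s * get_coord y c = get_coord x c"
  shows "pdiff f y c \<and> pd f y c = s * pd g x c + dh"
proof -
  obtain d where d: "((\<lambda>u. g (set_coord x c u)) has_real_derivative d) (at (get_coord x c))"
    using pg unfolding pdiff_def by blast
  have pdg: "pd g x c = d" unfolding pd_def using d by (blast intro: DERIV_unique)
  have "((\<lambda>t. g (set_coord x c (s*t))) has_real_derivative d * s) (at (get_coord y c))"
    using DERIV_chain2[where f="\<lambda>u. g (set_coord x c u)" and g="\<lambda>t. s*t", OF _ DERIV_cmult_Id] d st by simp
  then have "((\<lambda>t. g (set_coord x c (s*t)) + h t) has_real_derivative d * s + dh) (at (get_coord y c))"
    using hd by (rule DERIV_add)
  then have fd: "((\<lambda>t. f (set_coord y c t)) has_real_derivative s * d + dh) (at (get_coord y c))"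
    unfolding eq by (simp add: mult.commute)
  then have "pd f y c = s * d + dh" unfolding pd_def by (blast intro: DERIV_unique)
  with fd pdg show ?thesis unfolding pdiff_def by auto
qed

lemma diff_fro: "dfb A t0 \<Longrightarrow> (\<lambda>t. fro2 r c (A t)) differentiable (at t0)"
proof -
  assume "dfb A t0"
  then have "(\<lambda>t. Re (mtrace r (mmul c (A t) (ctr (A t))))) differentiable (at t0)"
    by (intro diff_tr dfb_mmul dfb_ctr)
  then show ?thesis by (simp add: fro2_tr)
qed

lemma dfb_TW: "dfb (\<lambda>t. TWm Rs (set_coord x c (s*t))) t0"
  unfolding TWm_def by (intro dfb_mmul dfb_base)

lemma diff_Q: "(\<lambda>t. Qf M Nd Rd Dd (set_coord x c (s*t))) differentiable (at t0)"
  unfolding Qf_def PFm_def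
  by (intro differentiable_sum ballI finite_lessThan diff_fro dfb_mmul dfb_base)

lemma pd_zero: "pd (\<lambda>_. 0) x c = 0"
  unfolding pd_def by (rule the_equality) (auto intro: DERIV_unique)

lemma pdiff_zero: "pdiff (\<lambda>_. 0) x c"
  unfolding pdiff_def by (auto intro: DERIV_const)

lemma Qf_nonneg: "Qf M Nd Rd Dd z \<ge> 0"
  unfolding Qf_def fro2_def by (intro sum_nonneg) auto

theorem theorem1:
  fixes M Ns Rs :: nat and Nd Rd Dd :: "nat \<Rightarrow> nat"
    and Pt :: real and sig sige :: "nat \<Rightarrow> real"
    and Hbar :: "nat \<Rightarrow> cmat" and L :: "nat \<Rightarrow> nat \<Rightarrow> real"
    and x :: var
  assumes "M \<ge> 1" and "Ns > 0" and "Rs > 0"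
    and "\<forall>m<M. Nd m > 0 \<and> Rd m > 0 \<and> Dd m > 0"
    and "Pt > 0" and "\<forall>m<M. sig m > 0 \<and> sige m \<ge> 0"
    and "is_perm_matrix (dimD M Dd) L"
    and KKT2: "KKT (free_coords M Ns Rs Nd Rd Dd) (MSEs M Ns Rs Nd Rd Dd L Hbar sig sige Pt)
                 (um_idx M Ns Rs Nd Rd) um_con ({} :: unit set) (\<lambda>_ _. 0) x"
    and "fro2 Ns (dimD M Dd) (TWm Rs x) \<noteq> 0"
  shows "let a = sqrt Pt / sqrt (fro2 Ns (dimD M Dd) (TWm Rs x)) in
         KKT (free_coords M Ns Rs Nd Rd Dd) (MSE M Ns Rs Nd Rd Dd L Hbar sig sige)
             (um_idx M Ns Rs Nd Rd) um_con ({()} :: unit set) (pow_con M Ns Rs Dd Pt)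
             (scale_point a sig x)"
proof -
  define F0 where "F0 = fro2 Ns (dimD M Dd) (TWm Rs x)"
  define a where "a = sqrt Pt / sqrt F0"
  define C where "C = free_coords M Ns Rs Nd Rd Dd"
  define E where "E = um_idx M Ns Rs Nd Rd"
  define y where "y = scale_point a sig x"
  define Q0 where "Q0 = Qf M Nd Rd Dd x"
  have F0pos: "F0 > 0"
  proof -
    have "F0 \<ge> 0" unfolding F0_def fro2_def by (intro sum_nonneg) auto
    then show ?thesis using assms(9) F0_def by auto
  qed
  have Pt: "Pt > 0" by fact
  have apos: "a > 0" unfolding a_def using F0pos Pt by simp
  have a2: "a^2 = Pt / F0" unfolding a_def using F0pos Pt by (simp add: power_divide)
  have a2F0: "a^2 * F0 = Pt" using a2 F0pos by simp
  have sig0: "\<forall>m<M. sig m \<noteq> 0" using assms(6) by auto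
  from KKT2 obtain lam where
      eqx: "\<forall>e\<in>E. um_con e x = 0" and
      pdx: "\<forall>c\<in>C. pdiff (MSEs M Ns Rs Nd Rd Dd L Hbar sig sige Pt) x c \<and> (\<forall>e\<in>E. pdiff (um_con e) x c)" and
      stx: "\<forall>c\<in>C. pd (MSEs M Ns Rs Nd Rd Dd L Hbar sig sige Pt) x c + (\<Sum>e\<in>E. lam e * pd (um_con e) x c) = 0"
    unfolding KKT_def C_def E_def by auto
  define mu where "mu = (\<lambda>_::unit. Q0 / (a^2 * Pt))"
  have powy: "pow_con M Ns Rs Dd Pt u y = 0" for u
    unfolding y_def pow_sc using a2F0 F0_def by simp
  have main: "pdiff (MSE M Ns Rs Nd Rd Dd L Hbar sig sige) y c \<and> (\<forall>e\<in>E. pdiff (um_con e) y c)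
      \<and> pdiff (pow_con M Ns Rs Dd Pt ()) y c
      \<and> pd (MSE M Ns Rs Nd Rd Dd L Hbar sig sige) y c + (\<Sum>e\<in>E. lam e * pd (um_con e) y c)
         + mu () * pd (pow_con M Ns Rs Dd Pt ()) y c = 0" if cC: "c \<in> C" for c
  proof -
    obtain b m i j p where c: "c = (b,m,i,j,p)" and bm: "b = BP \<longrightarrow> m < M"
      using cC unfolding C_def free_coords_def Let_def by auto
    have bs: "b = BP \<longrightarrow> sig m \<noteq> 0" using bm sig0 by auto
    define s where "s = scf a sig c"
    define t0 where "t0 = get_coord y c"
    define z where "z = (\<lambda>t. set_coord x c (s*t))"
    have st: "s * t0 = get_coord x c"
      unfolding s_def t0_def y_def using get_sc[where sig=sig and m=m, OF _ c bs] apos by auto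
    have sety: "set_coord y c t = scale_point a sig (z t)" for t
      unfolding y_def z_def s_def using set_sc[where sig=sig and m=m, OF _ c bs] apos by auto
    have zt0: "z t0 = x" unfolding z_def st by (rule set_get)
    define Fz where "Fz = (\<lambda>t. fro2 Ns (dimD M Dd) (TWm Rs (z t)))"
    define Qz where "Qz = (\<lambda>t. Qf M Nd Rd Dd (z t))"
    obtain dF where dF: "(Fz has_real_derivative dF) (at t0)"
      using diff_fro[OF dfb_TW] unfolding Fz_def z_def real_differentiable_def by blast
    obtain dQ where dQ: "(Qz has_real_derivative dQ) (at t0)"
      using diff_Q unfolding Qz_def z_def real_differentiable_def by blast
    have Fz0: "Fz t0 = F0" unfolding Fz_def zt0 F0_def ..
    have Qz0: "Qz t0 = Q0" unfolding Qz_def zt0 Q0_def ..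
    have hp: "((\<lambda>t. a^2 * Fz t - Pt) has_real_derivative a^2 * dF) (at t0)"
      using dF by (auto intro!: derivative_eq_intros)
    have P: "pdiff (pow_con M Ns Rs Dd Pt ()) y c \<and> pd (pow_con M Ns Rs Dd Pt ()) y c = s * pd (\<lambda>_. 0) x c + a^2 * dF"
      by (rule pd_transfer[OF _ pdiff_zero hp[unfolded t0_def] st[unfolded t0_def]])
         (simp add: sety pow_sc Fz_def)
    have hm: "((\<lambda>t. (1/a^2 - Fz t / Pt) * Qz t) has_real_derivative
                 (- dF / Pt) * Qz t0 + (1/a^2 - Fz t0 / Pt) * dQ) (at t0)"
      using dF dQ Pt by (auto intro!: derivative_eq_intros)
    have Mm: "pdiff (MSE M Ns Rs Nd Rd Dd L Hbar sig sige) y c \<and> pd (MSE M Ns Rs Nd Rd Dd L Hbar sig sige) y c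
        = s * pd (MSEs M Ns Rs Nd Rd Dd L Hbar sig sige Pt) x c + ((- dF / Pt) * Qz t0 + (1/a^2 - Fz t0 / Pt) * dQ)"
      unfolding t0_def by (rule pd_transfer[OF _ _ hm[unfolded t0_def] st[unfolded t0_def]])
         (use pdx cC in \<open>simp_all add: sety MSE_sc[OF _ sig0] apos[THEN less_imp_neq, symmetric] Fz_def Qz_def z_def\<close>)
    have U: "pdiff (um_con e) y c \<and> pd (um_con e) y c = s * pd (um_con e) x c + 0" if eE: "e \<in> E" for e
      by (rule pd_transfer[OF _ _ DERIV_const st[unfolded t0_def]])
         (use pdx cC eE in \<open>simp_all add: sety um_sc[OF eE[unfolded E_def]] z_def\<close>)
    have sumU: "(\<Sum>e\<in>E. lam e * pd (um_con e) y c) = s * (\<Sum>e\<in>E. lam e * pd (um_con e) x c)"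
      using U by (simp add: sum_distrib_left algebra_simps)
    have z0: "1/a^2 - F0 / Pt = 0" using a2F0 apos Pt by (simp add: field_simps)
    have pM: "pd (MSE M Ns Rs Nd Rd Dd L Hbar sig sige) y c
        = s * pd (MSEs M Ns Rs Nd Rd Dd L Hbar sig sige Pt) x c - dF * Q0 / Pt"
      using Mm unfolding Fz0 Qz0 z0 by simp
    have pP: "pd (pow_con M Ns Rs Dd Pt ()) y c = a^2 * dF" using P unfolding pd_zero by simp
    have mP: "mu () * (a^2 * dF) = dF * Q0 / Pt" unfolding mu_def using apos Pt by (simp add: field_simps)
    have "pd (MSE M Ns Rs Nd Rd Dd L Hbar sig sige) y c + (\<Sum>e\<in>E. lam e * pd (um_con e) y c)
         + mu () * pd (pow_con M Ns Rs Dd Pt ()) y c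
        = s * (pd (MSEs M Ns Rs Nd Rd Dd L Hbar sig sige Pt) x c + (\<Sum>e\<in>E. lam e * pd (um_con e) x c))"
      unfolding pM pP mP sumU by (simp add: algebra_simps)
    also have "\<dots> = 0" using stx cC by simp
    finally show ?thesis using Mm P U by auto
  qed
  have "KKT C (MSE M Ns Rs Nd Rd Dd L Hbar sig sige) E um_con ({()} :: unit set) (pow_con M Ns Rs Dd Pt) y"
    unfolding KKT_def
  proof (intro conjI)
    show "\<forall>e\<in>E. um_con e y = 0" using eqx um_sc unfolding y_def E_def by auto
    show "\<forall>i\<in>{()}. pow_con M Ns Rs Dd Pt i y \<le> 0" using powy by auto
    show "\<forall>c\<in>C. pdiff (MSE M Ns Rs Nd Rd Dd L Hbar sig sige) y c \<and> (\<forall>e\<in>E. pdiff (um_con e) y c) \<and>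
        (\<forall>i\<in>{()}. pdiff (pow_con M Ns Rs Dd Pt i) y c)" using main by auto
    show "\<exists>lam mu. (\<forall>i\<in>{()}. 0 \<le> mu i \<and> mu i * pow_con M Ns Rs Dd Pt i y = 0) \<and>
        (\<forall>c\<in>C. pd (MSE M Ns Rs Nd Rd Dd L Hbar sig sige) y c + (\<Sum>e\<in>E. lam e * pd (um_con e) y c) +
                 (\<Sum>i\<in>{()}. mu i * pd (pow_con M Ns Rs Dd Pt i) y c) = 0)"
    proof (intro exI conjI)
      show "\<forall>i\<in>{()}. 0 \<le> mu i \<and> mu i * pow_con M Ns Rs Dd Pt i y = 0"
        using powy Qf_nonneg apos Pt unfolding mu_def Q0_def by auto
      show "\<forall>c\<in>C. pd (MSE M Ns Rs Nd Rd Dd L Hbar sig sige) y c + (\<Sum>e\<in>E. lam e * pd (um_con e) y c) +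
                 (\<Sum>i\<in>{()}. mu i * pd (pow_con M Ns Rs Dd Pt i) y c) = 0"
        using main by simp
    qed
  qed
  then show ?thesis unfolding Let_def C_def E_def y_def a_def F0_def .
qed

end
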